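(* Let $U$ be a finite ground set partitioned as $\mathcal{P}=\{U_1,\dots,U_N\}$ and let $\vec p,\vec q\in\mathbb{R}^N_{\ge0}$. For any positive integers $\kappa_1\le\kappa_2$, $$\mathcal{M}_{fair}(\mathcal{P},\kappa_1,\lceil\vec p\kappa_1\rceil,\lceil\vec q\kappa_1\rceil)\subseteq\mathcal{M}_{fair}(\mathcal{P},\kappa_2,\lfloor\vec p\kappa_2\rfloor,\lceil\vec q\kappa_2\rceil).$$
   Context: Fairness matroid: $\mathcal{M}_{fair}(\mathcal{P},\kappa,\vec l,\vec u)=\{S\subseteq U: |S\cap U_c|\le u_c\ \forall c\in[N],\ \sum_{c\in[N]}\max\{|S\cap U_c|,l_c\}\le\kappa\}$. For a vector $\vec v$ and scalar $k$, $\vec v k$ denotes componentwise scaling, and $\lceil\cdot\rceil$, $\lfloor\cdot\rfloor$ are applied componentwise. *)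

theory Defs
  imports Complex_Main "HOL-Library.Disjoint_Sets"
begin

definition is_partition :: "'a set \<Rightarrow> nat \<Rightarrow> (nat \<Rightarrow> 'a set) \<Rightarrow> bool" where
  "is_partition U N P \<longleftrightarrow>
     (\<Union>c\<in>{..<N}. P c) = U \<and> disjoint_family_on P {..<N}"

definition M_fair :: "'a set \<Rightarrow> nat \<Rightarrow> (nat \<Rightarrow> 'a set) \<Rightarrow> int \<Rightarrow> (nat \<Rightarrow> int) \<Rightarrow> (nat \<Rightarrow> int) \<Rightarrow> 'a set set" where
  "M_fair U N P \<kappa> l u =
     {S. S \<subseteq> U \<and> (\<forall>c<N. int (card (S \<inter> P c)) \<le> u c) \<and>
         (\<Sum>c<N. max (int (card (S \<inter> P c))) (l c)) \<le> \<kappa>}"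

end

theory Submission
  imports Defs
begin

theorem lemma5:
  fixes U :: "'a set" and N :: nat and P :: "nat \<Rightarrow> 'a set"
    and p q :: "nat \<Rightarrow> real" and \<kappa>1 \<kappa>2 :: nat
  assumes "finite U"
    and "is_partition U N P"
    and "\<forall>c<N. p c \<ge> 0" and "\<forall>c<N. q c \<ge> 0"
    and "0 < \<kappa>1" and "\<kappa>1 \<le> \<kappa>2"
  shows "M_fair U N P (int \<kappa>1) (\<lambda>c. \<lceil>p c * real \<kappa>1\<rceil>) (\<lambda>c. \<lceil>q c * real \<kappa>1\<rceil>)
         \<subseteq> M_fair U N P (int \<kappa>2) (\<lambda>c. \<lfloor>p c * real \<kappa>2\<rfloor>) (\<lambda>c. \<lceil>q c * real \<kappa>2\<rceil>)"
proof
  fix S assume "S \<in> M_fair U N P (int \<kappa>1) (\<lambda>c. \<lceil>p c * real \<kappa>1\<rceil>) (\<lambda>c. \<lceil>q c * real \<kappa>1\<rceil>)"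
  hence SU: "S \<subseteq> U" and up: "\<forall>c<N. int (card (S \<inter> P c)) \<le> \<lceil>q c * real \<kappa>1\<rceil>"
    and sm: "(\<Sum>c<N. max (int (card (S \<inter> P c))) \<lceil>p c * real \<kappa>1\<rceil>) \<le> int \<kappa>1"
    by (auto simp: M_fair_def)
  define s where "s c = real (card (S \<inter> P c))" for c
  have k12: "real \<kappa>1 \<le> real \<kappa>2" using assms(6) by simp
  have up2: "\<forall>c<N. int (card (S \<inter> P c)) \<le> \<lceil>q c * real \<kappa>2\<rceil>"
  proof (intro allI impI)
    fix c assume c: "c < N"
    have "q c * real \<kappa>1 \<le> q c * real \<kappa>2" using assms(4) c k12 by (simp add: mult_left_mono)
    hence "\<lceil>q c * real \<kappa>1\<rceil> \<le> \<lceil>q c * real \<kappa>2\<rceil>" by (rule ceiling_mono)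
    thus "int (card (S \<inter> P c)) \<le> \<lceil>q c * real \<kappa>2\<rceil>" using up c by force
  qed
  have smr: "(\<Sum>c<N. max (s c) (of_int \<lceil>p c * real \<kappa>1\<rceil>)) \<le> real \<kappa>1"
  proof -
    have "(\<Sum>c<N. max (s c) (of_int \<lceil>p c * real \<kappa>1\<rceil>)) =
          real_of_int (\<Sum>c<N. max (int (card (S \<inter> P c))) \<lceil>p c * real \<kappa>1\<rceil>)"
      by (simp add: s_def of_int_max)
    thus ?thesis using sm by linarith
  qed
  have "(\<Sum>c<N. p c * real \<kappa>1) \<le> (\<Sum>c<N. max (s c) (of_int \<lceil>p c * real \<kappa>1\<rceil>))"
    by (rule sum_mono) (meson le_of_int_ceiling max.coboundedI2)
  hence "real \<kappa>1 * (\<Sum>c<N. p c) \<le> real \<kappa>1 * 1"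
    using smr by (simp add: sum_distrib_left mult.commute)
  hence sp: "(\<Sum>c<N. p c) \<le> 1" using assms(5) by simp
  have pc: "max (s c) (of_int \<lfloor>p c * real \<kappa>2\<rfloor>) \<le> max (s c) (of_int \<lceil>p c * real \<kappa>1\<rceil>) + p c * (real \<kappa>2 - real \<kappa>1)"
    if c: "c < N" for c
  proof -
    have "p c * (real \<kappa>2 - real \<kappa>1) \<ge> 0" using assms(3) c k12 by simp
    moreover have "of_int \<lfloor>p c * real \<kappa>2\<rfloor> \<le> p c * real \<kappa>2" by simp
    moreover have "p c * real \<kappa>1 \<le> of_int \<lceil>p c * real \<kappa>1\<rceil>" by simp
    ultimately show ?thesis by (simp add: right_diff_distrib) linarith
  qed
  have "(\<Sum>c<N. max (s c) (of_int \<lfloor>p c * real \<kappa>2\<rfloor>)) \<le>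
        (\<Sum>c<N. max (s c) (of_int \<lceil>p c * real \<kappa>1\<rceil>) + p c * (real \<kappa>2 - real \<kappa>1))"
    by (rule sum_mono) (use pc in auto)
  also have "\<dots> = (\<Sum>c<N. max (s c) (of_int \<lceil>p c * real \<kappa>1\<rceil>)) + (\<Sum>c<N. p c) * (real \<kappa>2 - real \<kappa>1)"
    by (simp add: sum.distrib sum_distrib_right)
  also have "\<dots> \<le> real \<kappa>1 + 1 * (real \<kappa>2 - real \<kappa>1)"
    using smr sp k12 by (intro add_mono mult_right_mono) auto
  finally have "(\<Sum>c<N. max (s c) (of_int \<lfloor>p c * real \<kappa>2\<rfloor>)) \<le> real \<kappa>2" by simp
  moreover have "(\<Sum>c<N. max (s c) (of_int \<lfloor>p c * real \<kappa>2\<rfloor>)) =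
          real_of_int (\<Sum>c<N. max (int (card (S \<inter> P c))) \<lfloor>p c * real \<kappa>2\<rfloor>)"
    by (simp add: s_def of_int_max)
  ultimately have "(\<Sum>c<N. max (int (card (S \<inter> P c))) \<lfloor>p c * real \<kappa>2\<rfloor>) \<le> int \<kappa>2"
    by linarith
  thus "S \<in> M_fair U N P (int \<kappa>2) (\<lambda>c. \<lfloor>p c * real \<kappa>2\<rfloor>) (\<lambda>c. \<lceil>q c * real \<kappa>2\<rceil>)"
    using SU up2 by (simp add: M_fair_def)
qed

end
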